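(* The formula $\mathsf F(p\Rightarrow\mathsf X p)$ (for $p\in\mathbb P$) is falsifiable on some bi-relational model, but in every bi-relational model $(W,T,\le,S,[\![\cdot]\!])$ in which it is falsified (i.e. $[\![\mathsf F(p\Rightarrow\mathsf Xp)]\!]\neq W\times T$), both $W$ and $T$ are infinite. Consequently none of the following properties holds: (strong FMP) every formula falsifiable on a bi-relational model is falsifiable on one with $W$ and $T$ finite; (order FMP) ... on one with $W$ finite; (temporal FMP) ... on one with $T$ finite.
   Context: Fix a countably infinite set $\mathbb P$ of propositional variables. The language $\mathcal L$ is given by $\varphi,\psi ::= p \mid \varphi\wedge\psi \mid \varphi\vee\psi \mid \varphi\Rightarrow\psi \mid \varphi\Leftarrow\psi \mid \mathsf X\varphi \mid \mathsf Y\varphi \mid \mathsf G\varphi \mid \mathsf H\varphi \mid \varphi\,\mathsf U\,\psi \mid \varphi\,\mathsf S\,\psi$; $\top:=p_0\Rightarrow p_0$ for fixed $p_0$, and $\mathsf F\varphi:=\top\,\mathsf U\,\varphi$. A bi-relational frame is $(W,T,\le,S)$ with $(W,\le)$ a linear order and $S\colon T\to T$ a bijection. A bi-relational model adds a valuation $[\![\cdot]\!]\colon\mathcal L\to 2^{W\times T}$ with each $[\![p]\!]$ downward closed in the first coordinate and: $[\![\varphi\wedge\psi]\!]=[\![\varphi]\!]\cap[\![\psi]\!]$; $[\![\varphi\vee\psi]\!]=[\![\varphi]\!]\cup[\![\psi]\!]$; $(w,t)\in[\![\varphi\Rightarrow\psi]\!]$ iff for all $v\le w$, $(v,t)\in[\![\varphi]\!]$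 implies $(v,t)\in[\![\psi]\!]$; $(w,t)\in[\![\varphi\Leftarrow\psi]\!]$ iff some $v\ge w$ has $(v,t)\in[\![\varphi]\!]\setminus[\![\psi]\!]$; $(w,t)\in[\![\mathsf X\varphi]\!]$ iff $(w,S(t))\in[\![\varphi]\!]$; $(w,t)\in[\![\mathsf Y\varphi]\!]$ iff $(w,S^{-1}(t))\in[\![\varphi]\!]$; $(w,t)\in[\![\mathsf G\varphi]\!]$ iff $(w,S^n(t))\in[\![\varphi]\!]$ for all $n\ge0$; $\mathsf H$ dually with $S^{-n}$; $(w,t)\in[\![\varphi\,\mathsf U\,\psi]\!]$ iff there is $n\ge0$ with $(w,S^i(t))\in[\![\varphi]\!]$ for $i<n$ and $(w,S^n(t))\in[\![\psi]\!]$; $\mathsf S$ dually with $S^{-i}$. A formula is falsifiable on a model if $[\![\varphi]\!]\ne W\times T$. *)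

theory Defs
  imports Main
begin

datatype form =
    Var nat
  | And form form
  | Or form form
  | Imp form form
  | Coimp form form
  | Next form
  | Prev form
  | Glob form
  | Hist form
  | Until form form
  | Since form form

definition Top :: form where "Top = Imp (Var 0) (Var 0)"

definition Fut :: "form \<Rightarrow> form" where "Fut \<phi> = Until Top \<phi>"

text \<open>Bi-relational frame (W, T, le, S): le is a linear order on W given as a relation
  ((v,w) \<in> le means v \<le> w), S a bijection of T.\<close>
definition bi_frame :: "'w set \<Rightarrow> ('w \<times> 'w) set \<Rightarrow> 't set \<Rightarrow> ('t \<Rightarrow> 't) \<Rightarrow> bool" where
  "bi_frame W le T S \<longleftrightarrow> linear_order_on W le \<and> bij_betw S T T"

definition bi_model :: "'w set \<Rightarrow> ('w \<times> 'w) set \<Rightarrow> 't set \<Rightarrow> ('t \<Rightarrow> 't)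
    \<Rightarrow> (nat \<Rightarrow> ('w \<times> 't) set) \<Rightarrow> bool" where
  "bi_model W le T S V \<longleftrightarrow> bi_frame W le T S \<and>
     (\<forall>q. V q \<subseteq> W \<times> T \<and>
          (\<forall>w v t. (w, t) \<in> V q \<longrightarrow> v \<in> W \<longrightarrow> (v, w) \<in> le \<longrightarrow> (v, t) \<in> V q))"

fun sem :: "'w set \<Rightarrow> ('w \<times> 'w) set \<Rightarrow> 't set \<Rightarrow> ('t \<Rightarrow> 't)
    \<Rightarrow> (nat \<Rightarrow> ('w \<times> 't) set) \<Rightarrow> form \<Rightarrow> ('w \<times> 't) set" where
  "sem W le T S V (Var q) = V q"
| "sem W le T S V (And \<phi> \<psi>) = sem W le T S V \<phi> \<inter> sem W le T S V \<psi>"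
| "sem W le T S V (Or \<phi> \<psi>) = sem W le T S V \<phi> \<union> sem W le T S V \<psi>"
| "sem W le T S V (Imp \<phi> \<psi>) = {(w, t). w \<in> W \<and> t \<in> T \<and>
      (\<forall>v\<in>W. (v, w) \<in> le \<longrightarrow> (v, t) \<in> sem W le T S V \<phi> \<longrightarrow> (v, t) \<in> sem W le T S V \<psi>)}"
| "sem W le T S V (Coimp \<phi> \<psi>) = {(w, t). w \<in> W \<and> t \<in> T \<and>
      (\<exists>v\<in>W. (w, v) \<in> le \<and> (v, t) \<in> sem W le T S V \<phi> \<and> (v, t) \<notin> sem W le T S V \<psi>)}"
| "sem W le T S V (Next \<phi>) = {(w, t). w \<in> W \<and> t \<in> T \<and> (w, S t) \<in> sem W le T S V \<phi>}"
| "sem W le T S V (Prev \<phi>) = {(w, t). w \<in> W \<and> t \<in> T \<and> (w, inv_into T S t) \<in> sem W le T S V \<phi>}"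
| "sem W le T S V (Glob \<phi>) = {(w, t). w \<in> W \<and> t \<in> T \<and>
      (\<forall>n. (w, (S ^^ n) t) \<in> sem W le T S V \<phi>)}"
| "sem W le T S V (Hist \<phi>) = {(w, t). w \<in> W \<and> t \<in> T \<and>
      (\<forall>n. (w, (inv_into T S ^^ n) t) \<in> sem W le T S V \<phi>)}"
| "sem W le T S V (Until \<phi> \<psi>) = {(w, t). w \<in> W \<and> t \<in> T \<and>
      (\<exists>n. (\<forall>i<n. (w, (S ^^ i) t) \<in> sem W le T S V \<phi>) \<and> (w, (S ^^ n) t) \<in> sem W le T S V \<psi>)}"
| "sem W le T S V (Since \<phi> \<psi>) = {(w, t). w \<in> W \<and> t \<in> T \<and>
      (\<exists>n. (\<forall>i<n. (w, (inv_into T S ^^ i) t) \<in> sem W le T S V \<phi>) \<and>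
           (w, (inv_into T S ^^ n) t) \<in> sem W le T S V \<psi>)}"

definition falsified :: "'w set \<Rightarrow> ('w \<times> 'w) set \<Rightarrow> 't set \<Rightarrow> ('t \<Rightarrow> 't)
    \<Rightarrow> (nat \<Rightarrow> ('w \<times> 't) set) \<Rightarrow> form \<Rightarrow> bool" where
  "falsified W le T S V \<phi> \<longleftrightarrow> sem W le T S V \<phi> \<noteq> W \<times> T"

definition falsifiable :: "'w itself \<Rightarrow> 't itself \<Rightarrow> form \<Rightarrow> bool" where
  "falsifiable _ _ \<phi> \<longleftrightarrow> (\<exists>(W::'w set) le (T::'t set) S V. bi_model W le T S V \<and> falsified W le T S V \<phi>)"

definition falsifiable_where :: "'w itself \<Rightarrow> 't itself \<Rightarrow> ('w set \<Rightarrow> 't set \<Rightarrow> bool) \<Rightarrow> form \<Rightarrow> bool" where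
  "falsifiable_where _ _ P \<phi> \<longleftrightarrow>
     (\<exists>(W::'w set) le (T::'t set) S V. P W T \<and> bi_model W le T S V \<and> falsified W le T S V \<phi>)"

definition strong_FMP :: "'w itself \<Rightarrow> 't itself \<Rightarrow> bool" where
  "strong_FMP a b \<longleftrightarrow> (\<forall>\<phi>. falsifiable TYPE(int) TYPE(int) \<phi> \<longrightarrow>
      falsifiable_where a b (\<lambda>W T. finite W \<and> finite T) \<phi>)"

definition order_FMP :: "'w itself \<Rightarrow> 't itself \<Rightarrow> bool" where
  "order_FMP a b \<longleftrightarrow> (\<forall>\<phi>. falsifiable TYPE(int) TYPE(int) \<phi> \<longrightarrow>
      falsifiable_where a b (\<lambda>W T. finite W) \<phi>)"

definition temporal_FMP :: "'w itself \<Rightarrow> 't itself \<Rightarrow> bool" where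
  "temporal_FMP a b \<longleftrightarrow> (\<forall>\<phi>. falsifiable TYPE(int) TYPE(int) \<phi> \<longrightarrow>
      falsifiable_where a b (\<lambda>W T. finite T) \<phi>)"

end

theory Submission
  imports Defs
begin

lemma funpow_succ_int: "((\<lambda>t::int. t + 1) ^^ n) x = x + int n"
  by (induction n) auto

lemma Top_sem: "sem W le T S V Top = W \<times> T"
  by (auto simp: Top_def)

lemma funpow_in: "bij_betw S T T \<Longrightarrow> t \<in> T \<Longrightarrow> (S ^^ n) t \<in> T"
  by (induction n) (auto simp: bij_betw_def)

lemma infinite_part:
  fixes W :: "'w set" and T :: "'t set"
  assumes M: "bi_model W le T S V"
    and F: "falsified W le T S V (Fut (Imp (Var p) (Next (Var p))))"
  shows "infinite W \<and> infinite T"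
proof -
  have lin: "linear_order_on W le" and bij: "bij_betw S T T"
    using M by (auto simp: bi_model_def bi_frame_def)
  have tot: "\<And>x y. x \<in> W \<Longrightarrow> y \<in> W \<Longrightarrow> x \<noteq> y \<Longrightarrow> (x,y) \<in> le \<or> (y,x) \<in> le"
    using lin by (auto simp: linear_order_on_def total_on_def)
  have dc: "\<And>u v t. (u,t) \<in> V p \<Longrightarrow> v \<in> W \<Longrightarrow> (v,u) \<in> le \<Longrightarrow> (v,t) \<in> V p"
    using M by (auto simp: bi_model_def)
  have sub: "V p \<subseteq> W \<times> T" using M by (auto simp: bi_model_def)
  obtain w t where wt: "w \<in> W" "t \<in> T"
    "(w,t) \<notin> sem W le T S V (Fut (Imp (Var p) (Next (Var p))))"
  proof -
    have "sem W le T S V (Fut (Imp (Var p) (Next (Var p)))) \<subseteq> W \<times> T"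
      by (auto simp: Fut_def)
    thus ?thesis using F that unfolding falsified_def by blast
  qed
  have tn: "\<And>n. (S ^^ n) t \<in> T" using funpow_in[OF bij wt(2)] .
  have key: "\<And>n. \<exists>v\<in>W. (v,w) \<in> le \<and> (v, (S^^n) t) \<in> V p \<and> (v, (S^^Suc n) t) \<notin> V p"
  proof (rule ccontr)
    fix n assume "\<not> (\<exists>v\<in>W. (v,w) \<in> le \<and> (v, (S^^n) t) \<in> V p \<and> (v, (S^^Suc n) t) \<notin> V p)"
    hence "(w, (S^^n) t) \<in> sem W le T S V (Imp (Var p) (Next (Var p)))"
      using wt tn sub by auto
    hence "(w,t) \<in> sem W le T S V (Fut (Imp (Var p) (Next (Var p))))"
      using wt by (auto simp: Fut_def Top_sem tn)
    thus False using wt by simp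
  qed
  define D where "D n = {v \<in> W. (v,w) \<in> le \<and> (v, (S^^n) t) \<in> V p}" for n
  have step: "D (Suc n) \<subset> D n" for n
  proof -
    obtain v where v: "v \<in> W" "(v,w) \<in> le" "(v, (S^^n) t) \<in> V p" "(v, (S^^Suc n) t) \<notin> V p"
      using key by blast
    have "D (Suc n) \<subseteq> D n"
    proof
      fix u assume u: "u \<in> D (Suc n)"
      hence uW: "u \<in> W" "(u,w) \<in> le" "(u, (S^^Suc n) t) \<in> V p" by (auto simp: D_def)
      have "u \<noteq> v" using uW v by auto
      moreover have "(v,u) \<notin> le" using dc[OF uW(3) v(1)] v(4) by blast
      ultimately have "(u,v) \<in> le" using tot uW v by blast
      thus "u \<in> D n" using dc[OF v(3) uW(1)] uW by (auto simp: D_def)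
    qed
    moreover have "v \<in> D n" "v \<notin> D (Suc n)" using v by (auto simp: D_def)
    ultimately show ?thesis by blast
  qed
  have chain: "D (n + Suc k) \<subset> D n" for n k
  proof (induction k)
    case 0 then show ?case using step by simp
  next
    case (Suc k)
    have "D (n + Suc (Suc k)) \<subset> D (n + Suc k)" using step[of "n + Suc k"] by simp
    with Suc show ?case by blast
  qed
  have neq: "i < j \<Longrightarrow> D j \<noteq> D i" for i j
  proof -
    assume "i < j"
    hence "j = i + Suc (j - i - 1)" by simp
    thus ?thesis using chain[of i "j - i - 1"] by (metis psubset_imp_ex_mem psubset_eq)
  qed
  have injD: "inj D"
    by (metis inj_def linorder_neqE_nat neq)
  have "finite W \<Longrightarrow> False"
  proof -
    assume fW: "finite W"
    have "range D \<subseteq> Pow W" by (auto simp: D_def)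
    hence "finite (range D)" using fW finite_subset by blast
    thus False using injD finite_imageD by (metis finite_UNIV_card_ge_0 finite_imageD infinite_UNIV_nat)
  qed
  moreover have "finite T \<Longrightarrow> False"
  proof -
    assume fT: "finite T"
    have "range (\<lambda>n. (S^^n) t) \<subseteq> T" using tn by auto
    hence "finite (range (\<lambda>n. (S^^n) t))" using fT finite_subset by blast
    hence "\<not> inj (\<lambda>n. (S^^n) t)" using finite_imageD infinite_UNIV_nat by blast
    then obtain i j where ij: "i \<noteq> j" "(S^^i) t = (S^^j) t" unfolding inj_def by blast
    hence "D i = D j" by (simp add: D_def)
    thus False using ij neq by (metis linorder_neqE_nat)
  qed
  ultimately show ?thesis by blast
qed

lemma falsifiable_part:
  "falsifiable TYPE(int) TYPE(int) (Fut (Imp (Var p) (Next (Var p))))"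
proof -
  let ?W = "UNIV :: int set" and ?le = "{(a,b). (a::int) \<le> b}" and ?T = "UNIV :: int set"
  let ?S = "\<lambda>t::int. t + 1" and ?V = "\<lambda>q::nat. {(v,t). (v::int) + (t::int) \<le> 0}"
  have lin: "linear_order_on ?W ?le"
    by (auto simp: linear_order_on_def partial_order_on_def preorder_on_def refl_on_def
        trans_def antisym_def total_on_def)
  have bij: "bij_betw ?S ?T ?T"
    unfolding bij_betw_def inj_on_def by (auto simp: image_iff intro!: exI[where x="_ - 1"])
  have M: "bi_model ?W ?le ?T ?S ?V"
    using lin bij by (auto simp: bi_model_def bi_frame_def)
  have "(0,0) \<notin> sem ?W ?le ?T ?S ?V (Fut (Imp (Var p) (Next (Var p))))"
  proof
    assume "(0,0) \<in> sem ?W ?le ?T ?S ?V (Fut (Imp (Var p) (Next (Var p))))"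
    then obtain n where "(0::int, (?S^^n) 0) \<in> sem ?W ?le ?T ?S ?V (Imp (Var p) (Next (Var p)))"
      by (auto simp: Fut_def)
    hence "\<forall>v. v \<le> 0 \<longrightarrow> v + int n \<le> 0 \<longrightarrow> v + (int n + 1) \<le> 0"
      by (simp add: funpow_succ_int)
    hence H: "\<And>v. v \<le> 0 \<Longrightarrow> v + int n \<le> 0 \<Longrightarrow> v + (int n + 1) \<le> 0" by blast
    have "- int n + (int n + 1) \<le> (0::int)" by (rule H) simp_all
    thus False by simp
  qed
  hence "falsified ?W ?le ?T ?S ?V (Fut (Imp (Var p) (Next (Var p))))"
    by (auto simp: falsified_def)
  thus ?thesis using M unfolding falsifiable_def by blast
qed

theorem proposition4p2:
  fixes p :: nat
  shows "falsifiable TYPE(int) TYPE(int) (Fut (Imp (Var p) (Next (Var p))))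
    \<and> (\<forall>(W::'w set) le (T::'t set) S V. bi_model W le T S V \<and>
           falsified W le T S V (Fut (Imp (Var p) (Next (Var p)))) \<longrightarrow> infinite W \<and> infinite T)
    \<and> \<not> strong_FMP TYPE('w2) TYPE('t2)
    \<and> \<not> order_FMP TYPE('w2) TYPE('t2)
    \<and> \<not> temporal_FMP TYPE('w2) TYPE('t2)"
proof -
  have A: "\<forall>(W::'w set) le (T::'t set) S V. bi_model W le T S V \<and>
           falsified W le T S V (Fut (Imp (Var p) (Next (Var p)))) \<longrightarrow> infinite W \<and> infinite T"
  proof (intro allI impI)
    fix W :: "'w set" and le and T :: "'t set" and S V
    assume "bi_model W le T S V \<and> falsified W le T S V (Fut (Imp (Var p) (Next (Var p))))"
    thus "infinite W \<and> infinite T" using infinite_part[of W le T S V p] by simp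
  qed
  have B: "\<not> (\<exists>(W::'w2 set) le (T::'t2 set) S V. Q W T \<and> bi_model W le T S V \<and>
           falsified W le T S V (Fut (Imp (Var p) (Next (Var p)))))"
    if Q: "\<And>W T. Q W T \<Longrightarrow> finite W \<or> finite T" for Q
  proof
    assume "\<exists>(W::'w2 set) le (T::'t2 set) S V. Q W T \<and> bi_model W le T S V \<and>
           falsified W le T S V (Fut (Imp (Var p) (Next (Var p))))"
    then obtain W :: "'w2 set" and le and T :: "'t2 set" and S V where
      h: "Q W T" "bi_model W le T S V" "falsified W le T S V (Fut (Imp (Var p) (Next (Var p))))"
      by blast
    have "infinite W \<and> infinite T" using infinite_part[OF h(2) h(3)] .
    with Q[OF h(1)] show False by simp
  qed
  have C: "falsifiable TYPE(int) TYPE(int) (Fut (Imp (Var p) (Next (Var p))))"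
    by (rule falsifiable_part)
  have D1: "\<not> strong_FMP TYPE('w2) TYPE('t2)"
    unfolding strong_FMP_def falsifiable_where_def using C B[of "\<lambda>W T. finite W \<and> finite T"] by auto
  have D2: "\<not> order_FMP TYPE('w2) TYPE('t2)"
    unfolding order_FMP_def falsifiable_where_def using C B[of "\<lambda>W T. finite W"] by auto
  have D3: "\<not> temporal_FMP TYPE('w2) TYPE('t2)"
    unfolding temporal_FMP_def falsifiable_where_def using C B[of "\<lambda>W T. finite T"] by auto
  show ?thesis using A C D1 D2 D3 by (intro conjI)
qed

end
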